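(* Let $\ell$ be an odd prime and suppose that $|S^2(\ell,T)|=o(T)$ as $T\to\infty$. Then $$|\{1\le n\le X: \Phi_\ell(n)\text{ is square-free}\}|\sim C X \quad\text{as } X\to\infty,$$ where $C=\prod_p\left(1-\frac{\delta(p^2)}{p^2}\right)$ (product over all primes $p$) and $\delta(N)=|\{a \bmod N: \Phi_\ell(a)\equiv 0 \pmod N\}|$.
   Context: $\Phi_\ell(X)$ denotes the $\ell$-th cyclotomic polynomial. For a natural number $n$, $R_\ell(n):=\min\{d\in\mathbb{N}: n\mid \Phi_\ell(d)\}$ if such $d$ exists, and $R_\ell(n)=\infty$ otherwise. $\mathbb{P}$ denotes the set of primes $p$ that divide $\Phi_\ell(d)$ for some $d\in\mathbb{N}$. For real $T$, $S^2(\ell,T):=\{p\in\mathbb{P}: R_\ell(p^2)\le T\}$. *)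

theory Defs
  imports "HOL-Analysis.Analysis" "HOL-Computational_Algebra.Computational_Algebra"
    "HOL-Library.Landau_Symbols" "HOL-Library.Extended_Nat"
begin

definition cyclo_poly :: "nat \<Rightarrow> complex poly" where
  "cyclo_poly n = (\<Prod>k\<in>{k. 1 \<le> k \<and> k \<le> n \<and> coprime k n}.
      [:- cis (2 * pi * real k / real n), 1:])"

text \<open>Its value at an integer argument; it has integer coefficients, so this is an integer.\<close>
definition Phi :: "nat \<Rightarrow> int \<Rightarrow> int" where
  "Phi n d = (THE m::int. complex_of_int m = poly (cyclo_poly n) (complex_of_int d))"

definition R :: "nat \<Rightarrow> nat \<Rightarrow> enat" where
  "R l n = (if \<exists>d::nat. d \<ge> 1 \<and> int n dvd Phi l (int d)
            then enat (LEAST d::nat. d \<ge> 1 \<and> int n dvd Phi l (int d)) else \<infinity>)"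

definition PP :: "nat \<Rightarrow> nat set" where
  "PP l = {p. prime p \<and> (\<exists>d::nat. d \<ge> 1 \<and> int p dvd Phi l (int d))}"

definition S2 :: "nat \<Rightarrow> real \<Rightarrow> nat set" where
  "S2 l T = {p \<in> PP l. (case R l (p^2) of enat d \<Rightarrow> real d \<le> T | \<infinity> \<Rightarrow> False)}"

definition delta :: "nat \<Rightarrow> nat \<Rightarrow> nat" where
  "delta l N = card {a \<in> {0..<N}. int N dvd Phi l (int a)}"

end

theory Submission
  imports Defs "HOL-Number_Theory.Number_Theory"
begin


definition ff :: "nat \<Rightarrow> int \<Rightarrow> int" where "ff l a = (\<Sum>j<l. a ^ j)"

lemma cyclo_prime_eq:
  assumes "prime l"
  shows "cyclo_poly l = (\<Sum>j<l. Polynomial.monom 1 j)"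
proof -
  have l0: "l > 0" "l > 1" using assms prime_gt_1_nat by (auto simp: prime_gt_0_nat)
  define z where "z = (\<lambda>k::nat. cis (2 * pi * real k / real l))"
  have bij: "bij_betw z {..<l} {w. w ^ l = 1}" unfolding z_def by (rule Complex.bij_betw_roots_unity) fact
  define Q where "Q = (\<Prod>k<l. [:- z k, 1:])"
  have set_eq: "{k. 1 \<le> k \<and> k \<le> l \<and> coprime k l} = {1..<l}"
  proof -
    have h1: "k \<noteq> l" if "coprime k l" for k using that l0 by auto
    have h2: "coprime k l" if "1 \<le> k" "k < l" for k
    proof -
      have "\<not> l dvd k" using that by (auto dest: dvd_imp_le)
      then show "coprime k l" using assms prime_imp_coprime coprime_commute by blast
    qed
    show ?thesis using h1 h2 by fastforce
  qed
  have cy: "cyclo_poly l = (\<Prod>k\<in>{1..<l}. [:- z k, 1:])"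
    unfolding cyclo_poly_def set_eq z_def ..
  have z0: "z 0 = 1" by (simp add: z_def)
  have "{..<l} = insert 0 {1..<l}" using l0 by auto
  then have Qs: "Q = [:-1, 1:] * cyclo_poly l"
    unfolding Q_def cy by (simp add: z0)
  have degQ: "degree Q = l" unfolding Q_def
    by (subst degree_prod_eq_sum_degree) auto
  have lcQ: "Polynomial.coeff Q l = 1"
  proof -
    have "lead_coeff Q = 1" unfolding Q_def by (subst lead_coeff_prod) auto
    thus ?thesis using degQ by simp
  qed
  have Qeq: "Q = Polynomial.monom 1 l - 1"
  proof (rule poly_eqI_degree_lead_coeff[of _ l _ "{w. w ^ l = 1}"])
    show "Polynomial.coeff Q l = Polynomial.coeff (Polynomial.monom 1 l - 1) l" using lcQ l0 by simp
    show "l \<le> card {w::complex. w ^ l = 1}" using card_roots_unity_eq l0 by simp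
    show "degree Q \<le> l" using degQ by simp
    show "degree (Polynomial.monom 1 l - 1 :: complex poly) \<le> l"
      by (metis degree_diff_le degree_monom_le degree_1 le0)
    fix w :: complex assume "w \<in> {w. w ^ l = 1}"
    then obtain k where k: "k < l" "w = z k" using bij unfolding bij_betw_def by auto
    have "poly Q w = 0" unfolding Q_def using k by (auto simp: poly_prod)
    moreover have "poly (Polynomial.monom 1 l - 1) w = 0" using \<open>w \<in> _\<close> by (simp add: poly_monom)
    ultimately show "poly Q w = poly (Polynomial.monom 1 l - 1) w" by simp
  qed
  have "[:-1, 1:] * cyclo_poly l = [:-1, 1:] * (\<Sum>j<l. Polynomial.monom (1::complex) j)"
  proof -
    have "poly ([:-1, 1:] * cyclo_poly l) = poly ([:-1, 1:] * (\<Sum>j<l. Polynomial.monom (1::complex) j))"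
    proof
      fix w :: complex
      have "poly ([:-1, 1:] * cyclo_poly l) w = w ^ l - 1"
      proof -
        have "poly ([:-1, 1:] * cyclo_poly l) w = poly Q w" using Qs by (simp only:)
        also have "\<dots> = w ^ l - 1" using Qeq by (simp add: poly_monom)
        finally show ?thesis .
      qed
      also have "\<dots> = (w - 1) * (\<Sum>j<l. w ^ j)"
        using power_diff_sumr2[of w l 1] by simp
      also have "\<dots> = poly ([:-1, 1:] * (\<Sum>j<l. Polynomial.monom (1::complex) j)) w"
        by (simp add: poly_sum poly_monom algebra_simps)
      finally show "poly ([:-1, 1:] * cyclo_poly l) w = poly ([:-1, 1:] * (\<Sum>j<l. Polynomial.monom (1::complex) j)) w" .
    qed
    thus ?thesis using poly_eq_poly_eq_iff by blast
  qed
  then show ?thesis by (rule mult_left_cancel[THEN iffD1, rotated]) simp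
qed

lemma Phi_prime:
  assumes "prime l"
  shows "Phi l d = ff l d"
proof -
  have "poly (cyclo_poly l) (complex_of_int d) = complex_of_int (ff l d)"
    using assms by (simp add: cyclo_prime_eq poly_sum poly_monom ff_def)
  then show ?thesis unfolding Phi_def
    by (intro the_equality) (auto simp: of_int_eq_iff)
qed



lemma ff_cong: "[a = b] (mod m) \<Longrightarrow> [ff l a = ff l b] (mod m)"
  unfolding ff_def by (intro cong_sum cong_pow) auto

lemma ff_ge1: "a \<ge> 0 \<Longrightarrow> l \<ge> 1 \<Longrightarrow> ff l a \<ge> 1"
proof -
  assume a: "a \<ge> 0" "l \<ge> 1"
  have "ff l a = a ^ 0 + (\<Sum>j\<in>{..<l} - {0}. a ^ j)" unfolding ff_def
    using a by (subst sum.remove[of _ 0]) auto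
  moreover have "(\<Sum>j\<in>{..<l} - {0}. a ^ j) \<ge> 0" using a by (intro sum_nonneg) auto
  ultimately show ?thesis by simp
qed

lemma ff_mult: "(a - 1) * ff l a = a ^ l - 1"
  unfolding ff_def using power_diff_sumr2[of a l 1] by (simp add: algebra_simps)

lemma binom_lift: "\<exists>r. (a + x :: int) ^ n = a ^ n + of_nat n * a ^ (n - 1) * x + x^2 * r"
proof (induction n)
  case 0 then show ?case by (intro exI[of _ 0]) simp
next
  case (Suc n)
  then obtain r where r: "(a + x) ^ n = a ^ n + of_nat n * a ^ (n - 1) * x + x^2 * r" by blast
  have "(a + x) ^ Suc n = (a + x) * (a ^ n + of_nat n * a ^ (n - 1) * x + x^2 * r)" using r by simp
  also have "\<dots> = a ^ Suc n + of_nat (Suc n) * a ^ (Suc n - 1) * x + x^2 * (a * r + of_nat n * a ^ (n - 1) + x * r)"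
  proof (cases n)
    case 0 then show ?thesis by (simp add: algebra_simps power2_eq_square)
  next
    case (Suc m) then show ?thesis by (simp add: algebra_simps power2_eq_square)
  qed
  finally show ?case by blast
qed

lemma lift_unique:
  fixes p a b :: int
  assumes p: "prime p" and pl: "\<not> p dvd int l"
    and ab: "[a = b] (mod p)" and a1: "[a ^ l = 1] (mod p^2)" and b1: "[b ^ l = 1] (mod p^2)"
  shows "[a = b] (mod p^2)"
proof -
  obtain t where t: "b = a + p * t" using ab unfolding cong_iff_dvd_diff
    by (metis dvdE cong_iff_dvd_diff add_diff_cancel_left' cong_sym_eq diff_add_cancel dvd_def)
  obtain r where r: "(a + p * t) ^ l = a ^ l + of_nat l * a ^ (l - 1) * (p * t) + (p * t)^2 * r"
    using binom_lift by blast
  have "[b ^ l = a ^ l] (mod p^2)" using a1 b1 by (metis cong_sym cong_trans)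
  then have "p^2 dvd b ^ l - a ^ l" by (simp add: cong_iff_dvd_diff)
  then have "p^2 dvd of_nat l * a ^ (l - 1) * (p * t) + (p * t)^2 * r" using r t by simp
  moreover have "p^2 dvd (p * t)^2 * r" by (simp add: power_mult_distrib)
  ultimately have "p^2 dvd of_nat l * a ^ (l - 1) * (p * t)" using dvd_add_left_iff by blast
  then have "p * p dvd p * (of_nat l * a ^ (l - 1) * t)" by (simp add: power2_eq_square algebra_simps)
  then have d: "p dvd of_nat l * a ^ (l - 1) * t" using p by (simp add: prime_gt_0_int)
  have na: "\<not> p dvd a"
  proof
    assume "p dvd a"
    then have "p dvd a ^ l" using pl by (cases l) auto
    moreover have "[a ^ l = 1] (mod p)" using a1 by (rule cong_dvd_modulus) simp
    ultimately have "p dvd 1" by (metis cong_dvd_iff)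
    then show False using p by auto
  qed
  have "\<not> p dvd a ^ (l - 1)" using na p prime_dvd_power by blast
  then have "p dvd t" using d pl p by (simp add: prime_dvd_mult_iff)
  then have "p^2 dvd b - a" using t by (simp add: power2_eq_square)
  then show ?thesis by (metis cong_iff_dvd_diff cong_sym)
qed

lemma delta_le:
  assumes l: "prime l" and p: "prime p"
  shows "delta l (p^2) \<le> l^2"
proof (cases "p = l")
  case True
  have "delta l (p^2) \<le> card {0..<p^2}" unfolding delta_def by (intro card_mono) auto
  then show ?thesis using True by simp
next
  case False
  have pl: "\<not> p dvd l" using False l p primes_dvd_imp_eq by blast
  have pli: "\<not> int p dvd int l" using pl by simp
  define D where "D = {a \<in> {0..<p^2}. int (p^2) dvd Phi l (int a)}"
  have Dpow: "[int a ^ l = 1] (mod int p ^ 2)" if "a \<in> D" for a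
  proof -
    have "int p ^ 2 dvd ff l (int a)" using that l by (simp add: D_def Phi_prime)
    then have "int p ^ 2 dvd int a ^ l - 1" by (metis ff_mult dvd_mult)
    then show ?thesis by (simp add: cong_iff_dvd_diff)
  qed
  have inj: "inj_on (\<lambda>a. a mod p) D"
  proof
    fix a b assume a: "a \<in> D" and b: "b \<in> D" and e: "a mod p = b mod p"
    have "[int a = int b] (mod int p)" using e by (metis cong_def cong_int_iff)
    then have "[int a = int b] (mod int p ^ 2)"
      using lift_unique[OF _ pli _ Dpow[OF a] Dpow[OF b]] p by simp
    then have "[a = b] (mod p ^ 2)" by (metis cong_int_iff of_nat_power)
    then show "a = b" using a b unfolding D_def by (simp add: cong_def)
  qed
  have sub: "(\<lambda>a. a mod p) ` D \<subseteq> {x\<in>{..<p}. [x ^ l = 1] (mod p)}"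
  proof safe
    fix a assume a: "a \<in> D"
    show "a mod p < p" using p prime_gt_0_nat by auto
    have "[int a ^ l = 1] (mod int p)" using Dpow[OF a] by (rule cong_dvd_modulus) simp
    then have "[a ^ l = 1] (mod p)" by (metis cong_int_iff of_nat_power of_nat_1)
    then show "[(a mod p) ^ l = 1] (mod p)" by (simp add: cong_def power_mod)
  qed
  have "delta l (p^2) = card D" unfolding delta_def D_def ..
  also have "\<dots> = card ((\<lambda>a. a mod p) ` D)" using inj by (simp add: card_image)
  also have "\<dots> \<le> card {x\<in>{..<p}. [x ^ l = 1] (mod p)}" by (intro card_mono sub) auto
  also have "\<dots> \<le> l" using p l by (intro roots_mod_prime_bound) (auto simp: prime_gt_0_nat)
  also have "\<dots> \<le> l^2" by (simp add: power2_eq_square)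
  finally show ?thesis .
qed



lemma crt_count:
  fixes m n :: nat and P Q :: "nat \<Rightarrow> bool"
  assumes cop: "coprime m n" and m: "m > 0" and n: "n > 0"
    and Pp: "\<And>a. P a = P (a mod m)" and Qp: "\<And>a. Q a = Q (a mod n)"
  shows "card {a\<in>{..<m*n}. P a \<and> Q a} = card {a\<in>{..<m}. P a} * card {a\<in>{..<n}. Q a}"
proof -
  define h where "h = (\<lambda>a::nat. (a mod m, a mod n))"
  have "bij_betw h {a\<in>{..<m*n}. P a \<and> Q a} ({a\<in>{..<m}. P a} \<times> {a\<in>{..<n}. Q a})"
    unfolding bij_betw_def
  proof
    show "inj_on h {a\<in>{..<m*n}. P a \<and> Q a}"
    proof
      fix x y assume x: "x \<in> {a\<in>{..<m*n}. P a \<and> Q a}" and y: "y \<in> {a\<in>{..<m*n}. P a \<and> Q a}"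
        and e: "h x = h y"
      have ex: "\<exists>!z. z < m * n \<and> [z = x] (mod m) \<and> [z = x] (mod n)"
        using binary_chinese_remainder_unique_nat[OF cop] m n by simp
      have "x < m * n \<and> [x = x] (mod m) \<and> [x = x] (mod n)"
           "y < m * n \<and> [y = x] (mod m) \<and> [y = x] (mod n)"
        using x y e by (auto simp: h_def cong_def)
      then show "x = y" using ex by blast
    qed
  next
    show "h ` {a\<in>{..<m*n}. P a \<and> Q a} = {a\<in>{..<m}. P a} \<times> {a\<in>{..<n}. Q a}"
    proof (intro equalityI subsetI)
      fix y assume "y \<in> h ` {a\<in>{..<m*n}. P a \<and> Q a}"
      then obtain x where "x \<in> {a\<in>{..<m*n}. P a \<and> Q a}" "y = h x" by blast
      then show "y \<in> {a\<in>{..<m}. P a} \<times> {a\<in>{..<n}. Q a}"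
        using m n Pp[of x, symmetric] Qp[of x, symmetric] by (auto simp: h_def)
    next
      fix y assume "y \<in> {a\<in>{..<m}. P a} \<times> {a\<in>{..<n}. Q a}"
      then obtain a b where ab: "y = (a, b)" and a: "a \<in> {a\<in>{..<m}. P a}" and b: "b \<in> {a\<in>{..<n}. Q a}" by blast
      obtain x where x: "x < m * n" "[x = a] (mod m)" "[x = b] (mod n)"
        using binary_chinese_remainder_unique_nat[OF cop, of a b] m n by auto
      have "x mod m = a" "x mod n = b" using x a b by (auto simp: cong_def)
      moreover have "P x" "Q x" using Pp[of x, symmetric] Qp[of x, symmetric] a b \<open>x mod m = a\<close> \<open>x mod n = b\<close> by auto
      ultimately show "y \<in> h ` {a\<in>{..<m*n}. P a \<and> Q a}" using x(1) ab
        unfolding h_def by (intro image_eqI[of _ _ x]) auto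
    qed
  qed
  then have "card {a\<in>{..<m*n}. P a \<and> Q a} = card ({a\<in>{..<m}. P a} \<times> {a\<in>{..<n}. Q a})"
    by (rule bij_betw_same_card)
  then show ?thesis by (simp add: card_cartesian_product)
qed

lemma periodic_block:
  fixes M q :: nat and P :: "nat \<Rightarrow> bool"
  assumes M: "M > 0" and Pp: "\<And>a. P a = P (a mod M)"
  shows "card {a\<in>{..<q*M}. P a} = q * card {a\<in>{..<M}. P a}"
proof -
  define h where "h = (\<lambda>a::nat. (a div M, a mod M))"
  have "bij_betw h {a\<in>{..<q*M}. P a} ({..<q} \<times> {a\<in>{..<M}. P a})"
    unfolding bij_betw_def
  proof
    show "inj_on h {a\<in>{..<q*M}. P a}"
    proof
      fix x y assume "h x = h y"
      then have "x div M = y div M" "x mod M = y mod M" by (auto simp: h_def)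
      then show "x = y" by (metis div_mult_mod_eq)
    qed
  next
    show "h ` {a\<in>{..<q*M}. P a} = {..<q} \<times> {a\<in>{..<M}. P a}"
    proof (intro equalityI subsetI)
      fix y assume "y \<in> h ` {a\<in>{..<q*M}. P a}"
      then obtain x where x: "x < q*M" "P x" "y = h x" by blast
      have "x div M < q" using x(1) by (simp add: less_mult_imp_div_less)
      moreover have "x mod M < M" using M by simp
      moreover have "P (x mod M)" using Pp[of x] x(2) by simp
      ultimately show "y \<in> {..<q} \<times> {a\<in>{..<M}. P a}" using x(3) by (simp add: h_def)
    next
      fix y assume "y \<in> {..<q} \<times> {a\<in>{..<M}. P a}"
      then obtain i b where ib: "y = (i, b)" and i: "i < q" and b: "b < M" "P b" by blast
      define x where "x = i * M + b"
      have xm: "x mod M = b" using b M by (simp add: x_def)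
      have xd: "x div M = i" using b M by (simp add: x_def)
      have "x < q * M"
      proof -
        have "x < i * M + M" using b by (simp add: x_def)
        also have "\<dots> = Suc i * M" by simp
        also have "\<dots> \<le> q * M" using i by (intro mult_right_mono) auto
        finally show ?thesis .
      qed
      moreover have "P x" using Pp[of x] b(2) xm by simp
      moreover have "y = h x" using ib xm xd by (simp add: h_def)
      ultimately show "y \<in> h ` {a\<in>{..<q*M}. P a}" by blast
    qed
  qed
  then have "card {a\<in>{..<q*M}. P a} = card ({..<q} \<times> {a\<in>{..<M}. P a})"
    by (rule bij_betw_same_card)
  then show ?thesis by (simp add: card_cartesian_product)
qed

lemma periodic_count_bounds:
  fixes M N :: nat and P :: "nat \<Rightarrow> bool"
  assumes M: "M > 0" and Pp: "\<And>a. P a = P (a mod M)"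
  defines "K \<equiv> card {a\<in>{..<M}. P a}"
  shows "\<bar>real (card {a\<in>{..<N}. P a}) - real K / real M * real N\<bar> \<le> real K"
proof -
  define q where "q = N div M"
  have q1: "q * M \<le> N" unfolding q_def by (simp add: div_times_less_eq_dividend)
  have q2: "N < Suc q * M"
  proof -
    have "N = q * M + N mod M" unfolding q_def by simp
    moreover have "N mod M < M" using M by simp
    ultimately show ?thesis by simp
  qed
  have lo: "q * K \<le> card {a\<in>{..<N}. P a}"
  proof -
    have "q * K = card {a\<in>{..<q*M}. P a}" using periodic_block[of M P q, OF M Pp] unfolding K_def by simp
    also have "\<dots> \<le> card {a\<in>{..<N}. P a}" using q1 by (intro card_mono) auto
    finally show ?thesis .
  qed
  have hi: "card {a\<in>{..<N}. P a} \<le> Suc q * K"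
  proof -
    have "card {a\<in>{..<N}. P a} \<le> card {a\<in>{..<Suc q*M}. P a}" using q2 by (intro card_mono) auto
    also have "\<dots> = Suc q * K" using periodic_block[of M P "Suc q", OF M Pp] unfolding K_def by simp
    finally show ?thesis .
  qed
  have r1: "real q * real M \<le> real N"
  proof -
    have "real (q * M) \<le> real N" using q1 by (simp only: of_nat_le_iff)
    then show ?thesis by simp
  qed
  have r2: "real N \<le> (real q + 1) * real M"
  proof -
    have "real N \<le> real (Suc q * M)" using q2 by (simp only: of_nat_le_iff less_imp_le)
    then show ?thesis by (simp add: algebra_simps)
  qed
  have Mr: "real M > 0" using M by simp
  have a1: "real K / real M * real N \<le> (real q + 1) * real K"
  proof -
    have "real K / real M * real N \<le> real K / real M * ((real q + 1) * real M)"
      using r2 by (intro mult_left_mono) auto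
    also have "\<dots> = (real q + 1) * real K" using Mr by simp
    finally show ?thesis .
  qed
  have a2: "real q * real K \<le> real K / real M * real N"
  proof -
    have "real q * real K = real K / real M * (real q * real M)" using Mr by simp
    also have "\<dots> \<le> real K / real M * real N" using r1 by (intro mult_left_mono) auto
    finally show ?thesis .
  qed
  have lo': "real q * real K \<le> real (card {a\<in>{..<N}. P a})"
  proof -
    have "real (q * K) \<le> real (card {a\<in>{..<N}. P a})" using lo by (simp only: of_nat_le_iff)
    then show ?thesis by simp
  qed
  have hi': "real (card {a\<in>{..<N}. P a}) \<le> (real q + 1) * real K"
  proof -
    have "real (card {a\<in>{..<N}. P a}) \<le> real (Suc q * K)" using hi by (simp only: of_nat_le_iff)
    then show ?thesis by (simp add: algebra_simps)
  qed
  show ?thesis using lo' hi' a1 a2 by (simp add: abs_le_iff algebra_simps)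
qed

lemma bounded_dev_tendsto:
  fixes u :: "nat \<Rightarrow> real"
  assumes "\<And>N. \<bar>u N - c * real N\<bar> \<le> B"
  shows "(\<lambda>N. u N / real N) \<longlonglongrightarrow> c"
proof (rule tendsto_sandwich[of "\<lambda>N. c - B / real N" _ _ "\<lambda>N. c + B / real N"])
  show "eventually (\<lambda>N. c - B / real N \<le> u N / real N) sequentially"
    using eventually_gt_at_top[of 0]
  proof eventually_elim
    case (elim N)
    have "c * real N - B \<le> u N" using assms[of N] by (simp add: abs_le_iff)
    have "c - B / real N = (c * real N - B) / real N" using elim by (simp add: field_simps)
    also have "\<dots> \<le> u N / real N" using \<open>c * real N - B \<le> u N\<close> by (intro divide_right_mono) auto
    finally show ?case .
  qed
  show "eventually (\<lambda>N. u N / real N \<le> c + B / real N) sequentially"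
    using eventually_gt_at_top[of 0]
  proof eventually_elim
    case (elim N)
    have "u N \<le> c * real N + B" using assms[of N] by (simp add: abs_le_iff)
    then have "u N / real N \<le> (c * real N + B) / real N" by (intro divide_right_mono) auto
    also have "\<dots> = c + B / real N" using elim by (simp add: field_simps)
    finally show ?case .
  qed
  show "(\<lambda>N. c - B / real N) \<longlonglongrightarrow> c" by (intro tendsto_eq_intros) auto
  show "(\<lambda>N. c + B / real N) \<longlonglongrightarrow> c" by (intro tendsto_eq_intros) auto
qed

definition goodP :: "nat \<Rightarrow> nat set \<Rightarrow> nat \<Rightarrow> bool" where
  "goodP l P n = (\<forall>p\<in>P. \<not> int (p^2) dvd ff l (int n))"

definition MP :: "nat set \<Rightarrow> nat" where "MP P = (\<Prod>p\<in>P. p^2)"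

lemma ff_mod_nat: "m dvd M \<Longrightarrow> [ff l (int (a mod M)) = ff l (int a)] (mod int m)"
proof -
  assume "m dvd M"
  have "[int (a mod M) = int a] (mod int M)" by (simp add: cong_def zmod_int)
  moreover have "int m dvd int M" using \<open>m dvd M\<close> by simp
  ultimately have "[int (a mod M) = int a] (mod int m)"
    using cong_dvd_modulus by blast
  then show ?thesis by (rule ff_cong)
qed

lemma goodP_periodic: "finite P \<Longrightarrow> goodP l P a = goodP l P (a mod MP P)"
proof -
  assume fin: "finite P"
  have "\<not> int (p^2) dvd ff l (int a) \<longleftrightarrow> \<not> int (p^2) dvd ff l (int (a mod MP P))" if "p \<in> P" for p
  proof -
    have "p^2 dvd MP P" unfolding MP_def using fin that by (intro dvd_prodI) auto
    then have "[ff l (int (a mod MP P)) = ff l (int a)] (mod int (p^2))" by (rule ff_mod_nat)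
    then show ?thesis using cong_dvd_iff by blast
  qed
  then show ?thesis unfolding goodP_def by blast
qed

lemma MP_pos: "\<forall>p\<in>P. prime p \<Longrightarrow> MP P > 0"
  unfolding MP_def by (intro prod_pos) (auto simp: prime_gt_0_nat)

lemma count_single:
  assumes "prime l"
  shows "card {a\<in>{..<q^2}. \<not> int (q^2) dvd ff l (int a)} = q^2 - delta l (q^2)"
proof -
  have e: "{a \<in> {0..<q^2}. int (q^2) dvd Phi l (int a)} = {a\<in>{..<q^2}. int (q^2) dvd ff l (int a)}"
    using assms by (simp only: Phi_prime atLeast0LessThan)
  have d: "{a\<in>{..<q^2}. \<not> int (q^2) dvd ff l (int a)} = {..<q^2} - {a\<in>{..<q^2}. int (q^2) dvd ff l (int a)}"
    by blast
  have "card ({..<q^2} - {a\<in>{..<q^2}. int (q^2) dvd ff l (int a)}) = card {..<q^2} - card {a\<in>{..<q^2}. int (q^2) dvd ff l (int a)}"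
    by (rule card_Diff_subset) auto
  then show ?thesis unfolding d delta_def e by simp
qed

lemma good_count:
  assumes l: "prime l" and fin: "finite P" and pr: "\<forall>p\<in>P. prime p"
  shows "card {a\<in>{..<MP P}. goodP l P a} = (\<Prod>p\<in>P. (p^2 - delta l (p^2)))"
  using fin pr
proof (induction P rule: finite_induct)
  case empty
  then show ?case by (simp add: MP_def goodP_def)
next
  case (insert q P)
  have q: "prime q" using insert by auto
  have pr: "\<forall>p\<in>P. prime p" using insert by auto
  have cop: "coprime (q^2) (MP P)" unfolding MP_def
  proof (intro prod_coprime_right)
    fix p assume "p \<in> P"
    then have "p \<noteq> q" "prime p" using insert by auto
    then have "coprime q p" using q primes_coprime by blast
    then show "coprime (q^2) (p^2)" by simp
  qed
  have MPi: "MP (insert q P) = q^2 * MP P" unfolding MP_def using insert by simp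
  have gi: "goodP l (insert q P) a = ((\<not> int (q^2) dvd ff l (int a)) \<and> goodP l P a)" for a
    unfolding goodP_def by auto
  have "card {a\<in>{..<MP (insert q P)}. goodP l (insert q P) a}
      = card {a\<in>{..<q^2 * MP P}. (\<not> int (q^2) dvd ff l (int a)) \<and> goodP l P a}"
    unfolding MPi gi ..
  also have "\<dots> = card {a\<in>{..<q^2}. \<not> int (q^2) dvd ff l (int a)} * card {a\<in>{..<MP P}. goodP l P a}"
  proof (rule crt_count[OF cop])
    show "q^2 > 0" using q prime_gt_0_nat by auto
    show "MP P > 0" using MP_pos pr by auto
    show "goodP l P a = goodP l P (a mod MP P)" for a using goodP_periodic insert by blast
    show "(\<not> int (q^2) dvd ff l (int a)) = (\<not> int (q^2) dvd ff l (int (a mod q^2)))" for a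
      using ff_mod_nat[of "q^2" "q^2" l a] cong_dvd_iff by (metis dvd_refl)
  qed
  also have "\<dots> = (q^2 - delta l (q^2)) * (\<Prod>p\<in>P. (p^2 - delta l (p^2)))"
    using count_single[OF l] insert pr by simp
  also have "\<dots> = (\<Prod>p\<in>insert q P. (p^2 - delta l (p^2)))" using insert by simp
  finally show ?case .
qed



lemma sqfree_iff:
  assumes "x \<noteq> 0"
  shows "squarefree (x::int) \<longleftrightarrow> (\<forall>p::nat. prime p \<longrightarrow> \<not> int (p^2) dvd x)"
proof
  assume sq: "squarefree x"
  show "\<forall>p::nat. prime p \<longrightarrow> \<not> int (p^2) dvd x"
  proof (intro allI impI)
    fix p :: nat assume "prime p"
    then have "prime (int p)" by (simp add: prime_nat_int_transfer)
    moreover have "\<forall>q::int. prime q \<longrightarrow> \<not> q^2 dvd x" using sq squarefree_factorial_semiring[OF assms] by blast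
    ultimately show "\<not> int (p^2) dvd x" by simp
  qed
next
  assume h: "\<forall>p::nat. prime p \<longrightarrow> \<not> int (p^2) dvd x"
  show "squarefree x"
  proof (subst squarefree_factorial_semiring[OF assms], intro allI impI)
    fix q :: int assume q: "prime q"
    then have "q \<ge> 0" by (simp add: prime_ge_0_int)
    then have qe: "q = int (nat q)" by simp
    have "prime (nat q)" using q qe by (metis prime_nat_int_transfer)
    then have "\<not> int ((nat q)^2) dvd x" using h by blast
    then show "\<not> q^2 dvd x" using qe by (metis of_nat_power)
  qed
qed

lemma count_res:
  assumes m: "m > 0"
  shows "card {n\<in>{1..N}. n mod m = a} \<le> N div m + 1"
proof -
  have inj: "inj_on (\<lambda>n. n div m) {n\<in>{1..N}. n mod m = a}"
  proof
    fix x y assume x: "x \<in> {n\<in>{1..N}. n mod m = a}" and y: "y \<in> {n\<in>{1..N}. n mod m = a}"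
      and e: "x div m = y div m"
    have "x mod m = y mod m" using x y by simp
    then show "x = y" using e by (metis div_mult_mod_eq)
  qed
  have sub: "(\<lambda>n. n div m) ` {n\<in>{1..N}. n mod m = a} \<subseteq> {..N div m}"
    by (auto intro: div_le_mono)
  have "card {n\<in>{1..N}. n mod m = a} = card ((\<lambda>n. n div m) ` {n\<in>{1..N}. n mod m = a})"
    using inj by (simp add: card_image)
  also have "\<dots> \<le> card {..N div m}" by (intro card_mono sub) auto
  finally show ?thesis by simp
qed

lemma count_dvd:
  assumes l: "prime l" and m: "m > 0"
  shows "card {n\<in>{1..N}. int m dvd ff l (int n)} \<le> delta l m * (N div m + 1)"
proof -
  define D where "D = {a \<in> {0..<m}. int m dvd Phi l (int a)}"
  have sub: "{n\<in>{1..N}. int m dvd ff l (int n)} \<subseteq> (\<Union>a\<in>D. {n\<in>{1..N}. n mod m = a})"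
  proof
    fix n assume n: "n \<in> {n\<in>{1..N}. int m dvd ff l (int n)}"
    have c: "[ff l (int (n mod m)) = ff l (int n)] (mod int m)" by (rule ff_mod_nat) simp
    have "int m dvd ff l (int (n mod m))" using n c cong_dvd_iff by blast
    then have "n mod m \<in> D" using m l by (simp add: D_def Phi_prime)
    then show "n \<in> (\<Union>a\<in>D. {n\<in>{1..N}. n mod m = a})" using n by blast
  qed
  have "card {n\<in>{1..N}. int m dvd ff l (int n)} \<le> card (\<Union>a\<in>D. {n\<in>{1..N}. n mod m = a})"
    by (intro card_mono sub finite_UN_I) (auto simp: D_def)
  also have "\<dots> \<le> (\<Sum>a\<in>D. card {n\<in>{1..N}. n mod m = a})"
    by (intro card_UN_le) (simp add: D_def)
  also have "\<dots> \<le> (\<Sum>a\<in>D. N div m + 1)"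
    by (intro sum_mono count_res m)
  also have "\<dots> = delta l m * (N div m + 1)" by (simp add: D_def delta_def)
  finally show ?thesis .
qed

lemma count_dvd_real:
  assumes l: "prime l" and m: "m > 0"
  shows "real (card {n\<in>{1..N}. int m dvd ff l (int n)}) \<le> real (delta l m) * (real N / real m + 1)"
proof -
  have "real (card {n\<in>{1..N}. int m dvd ff l (int n)}) \<le> real (delta l m * (N div m + 1))"
    using count_dvd[OF l m, of N] by (simp only: of_nat_le_iff)
  also have "\<dots> = real (delta l m) * (real (N div m) + 1)" by (simp add: algebra_simps)
  also have "\<dots> \<le> real (delta l m) * (real N / real m + 1)"
    by (intro mult_left_mono add_right_mono of_nat_div_le_of_nat) auto
  finally show ?thesis .
qed

lemma tail_interval:
  assumes "\<xi> \<ge> 1" "K \<ge> \<xi>"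
  shows "(\<Sum>n\<in>{\<xi><..K}. 1 / real n ^ 2) \<le> 1 / real \<xi> - 1 / real K"
  using assms(2)
proof (induction K rule: dec_induct)
  case base then show ?case by simp
next
  case (step K)
  have K: "real K \<ge> 1" using step assms by simp
  have "{\<xi><..Suc K} = insert (Suc K) {\<xi><..K}" using step by auto
  then have "(\<Sum>n\<in>{\<xi><..Suc K}. 1 / real n ^ 2) = 1 / real (Suc K) ^ 2 + (\<Sum>n\<in>{\<xi><..K}. 1 / real n ^ 2)"
    by simp
  also have "\<dots> \<le> 1 / real (Suc K) ^ 2 + (1 / real \<xi> - 1 / real K)" using step by simp
  also have "1 / real (Suc K) ^ 2 \<le> 1 / real K - 1 / real (Suc K)"
  proof -
    define k where "k = real K"
    have k: "k \<ge> 1" using K by (simp add: k_def)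
    have e1: "1 / k - 1 / (k + 1) = 1 / (k * (k + 1))" using k by (simp add: field_simps)
    have a: "k * (k + 1) \<le> (k + 1) ^ 2" using k by (simp add: power2_eq_square algebra_simps)
    have b: "0 < (k + 1) ^ 2 * (k * (k + 1))" using k by (intro mult_pos_pos) auto
    have "1 / (k + 1) ^ 2 \<le> 1 / (k * (k + 1))" using a b k by (intro divide_left_mono) auto
    then show ?thesis using e1 by (simp add: k_def add.commute)
  qed
  then have "1 / real (Suc K) ^ 2 + (1 / real \<xi> - 1 / real K) \<le> 1 / real \<xi> - 1 / real (Suc K)" by simp
  finally show ?case .
qed

lemma tail_sum:
  assumes fin: "finite S" and gt: "\<forall>n\<in>S. n > \<xi>" and xi: "\<xi> \<ge> 1"
  shows "(\<Sum>n\<in>S. 1 / real n ^ 2) \<le> 1 / real \<xi>"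
proof (cases "S = {}")
  case True then show ?thesis by simp
next
  case False
  define K where "K = Max S"
  have KS: "K \<in> S" using fin False by (simp add: K_def)
  have Kxi: "K \<ge> \<xi>" using gt KS by fastforce
  have sub: "S \<subseteq> {\<xi><..K}" using gt fin K_def by auto
  have "(\<Sum>n\<in>S. 1 / real n ^ 2) \<le> (\<Sum>n\<in>{\<xi><..K}. 1 / real n ^ 2)"
    by (intro sum_mono2 sub) auto
  also have "\<dots> \<le> 1 / real \<xi> - 1 / real K" by (rule tail_interval[OF xi Kxi])
  also have "\<dots> \<le> 1 / real \<xi>" by simp
  finally show ?thesis .
qed

lemma in_S2:
  assumes l: "prime l" and p: "prime p" and n: "1 \<le> n" "n \<le> N" and d: "int (p^2) dvd ff l (int n)"
  shows "p \<in> S2 l (real N)"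
proof -
  have ex: "\<exists>d::nat. d \<ge> 1 \<and> int (p^2) dvd Phi l (int d)" using n d l by (auto simp: Phi_prime)
  define d0 where "d0 = (LEAST d::nat. d \<ge> 1 \<and> int (p^2) dvd Phi l (int d))"
  have R: "R l (p^2) = enat d0" using ex by (simp add: R_def d0_def)
  have "d0 \<le> n" unfolding d0_def using n d l by (intro Least_le) (auto simp: Phi_prime)
  then have le: "real d0 \<le> real N" using n by simp
  have "int p dvd ff l (int n)" using d by (metis dvd_mult_left of_nat_power power2_eq_square)
  then have "p \<in> PP l" using n l p by (auto simp: PP_def Phi_prime)
  then show ?thesis using R le by (simp add: S2_def)
qed

lemma S2_finite:
  assumes l: "prime l"
  shows "finite (S2 l (real N))"
proof -
  have "S2 l (real N) \<subseteq> (\<Union>d\<in>{1..N}. {..nat (ff l (int d))})"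
  proof
    fix p assume pS: "p \<in> S2 l (real N)"
    then have p: "prime p" by (simp add: S2_def PP_def)
    have ex: "\<exists>d::nat. d \<ge> 1 \<and> int (p^2) dvd Phi l (int d)"
    proof (rule ccontr)
      assume "\<not> ?thesis"
      then have "R l (p^2) = \<infinity>" by (simp add: R_def)
      then show False using pS by (simp add: S2_def)
    qed
    define d0 where "d0 = (LEAST d::nat. d \<ge> 1 \<and> int (p^2) dvd Phi l (int d))"
    have R: "R l (p^2) = enat d0" using ex by (simp add: R_def d0_def)
    have d0N: "real d0 \<le> real N" using pS R by (simp add: S2_def)
    have d0p: "d0 \<ge> 1 \<and> int (p^2) dvd Phi l (int d0)" unfolding d0_def using ex by (rule LeastI_ex)
    have dv: "int (p^2) dvd ff l (int d0)" using d0p l by (simp add: Phi_prime)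
    have pos: "ff l (int d0) \<ge> 1" using l by (intro ff_ge1) (auto simp: prime_gt_0_nat Suc_leI)
    have "int (p^2) \<le> ff l (int d0)" using dv pos by (intro zdvd_imp_le) auto
    moreover have "p \<le> p^2" by (simp add: power2_eq_square)
    ultimately have "p \<le> nat (ff l (int d0))" by linarith
    moreover have "d0 \<in> {1..N}" using d0p d0N by simp
    ultimately show "p \<in> (\<Union>d\<in>{1..N}. {..nat (ff l (int d))})" by blast
  qed
  then show ?thesis by (rule finite_subset) auto
qed



definition aa :: "nat \<Rightarrow> nat \<Rightarrow> real" where
  "aa l p = (if prime p then 1 - real (delta l (p^2)) / real (p^2) else 1)"

definition Pxi :: "nat \<Rightarrow> nat set" where "Pxi xi = {p. prime p \<and> p \<le> xi}"

definition AA :: "nat \<Rightarrow> nat \<Rightarrow> nat" where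
  "AA l N = card {n\<in>{1..N}. squarefree (ff l (int n))}"

definition GG :: "nat \<Rightarrow> nat \<Rightarrow> nat \<Rightarrow> nat" where
  "GG l xi N = card {n\<in>{1..N}. goodP l (Pxi xi) n}"

lemma Pxi_finite: "finite (Pxi xi)" unfolding Pxi_def by auto

lemma ff_0: "l > 0 \<Longrightarrow> ff l 0 = 1"
  unfolding ff_def by (simp add: power_0_left)

lemma delta_lt:
  assumes l: "prime l" and p: "prime p"
  shows "delta l (p^2) < p^2"
proof -
  have l0: "l > 0" using l prime_gt_0_nat by auto
  have p1: "p^2 > 1"
  proof -
    have "p \<ge> 2" using p by (rule prime_ge_2_nat)
    then have "p^2 \<ge> 2^2" by (rule power_mono) simp
    then show ?thesis by simp
  qed
  have "{a \<in> {0..<p^2}. int (p^2) dvd Phi l (int a)} \<subseteq> {0..<p^2} - {0}"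
  proof
    fix a assume a: "a \<in> {a \<in> {0..<p^2}. int (p^2) dvd Phi l (int a)}"
    have "a \<noteq> 0"
    proof
      assume "a = 0"
      then have "int (p^2) dvd 1" using a l l0 by (simp add: Phi_prime ff_0)
      then have "p^2 = 1" by (metis of_nat_1 of_nat_dvd_iff nat_dvd_1_iff_1)
      then show False using p1 by simp
    qed
    then show "a \<in> {0..<p^2} - {0}" using a by simp
  qed
  then have "delta l (p^2) \<le> card ({0..<p^2} - {0::nat})" unfolding delta_def
    by (intro card_mono) auto
  also have "\<dots> = p^2 - 1" using p1 prime_gt_0_nat[OF p] by (subst card_Diff_singleton) auto
  finally show ?thesis using p1 by simp
qed

lemma AA_le_GG:
  assumes l: "prime l"
  shows "AA l N \<le> GG l xi N"
  unfolding AA_def GG_def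
proof (intro card_mono)
  show "{n \<in> {1..N}. squarefree (ff l (int n))} \<subseteq> {n \<in> {1..N}. goodP l (Pxi xi) n}"
  proof
    fix n assume n: "n \<in> {n \<in> {1..N}. squarefree (ff l (int n))}"
    have "ff l (int n) \<ge> 1" using l by (intro ff_ge1) (auto simp: prime_gt_0_nat Suc_leI)
    then have "\<forall>p::nat. prime p \<longrightarrow> \<not> int (p^2) dvd ff l (int n)" using n sqfree_iff by auto
    then show "n \<in> {n \<in> {1..N}. goodP l (Pxi xi) n}" using n by (auto simp: goodP_def Pxi_def)
  qed
qed auto

lemma GG_le:
  assumes l: "prime l" and xi: "xi \<ge> 1"
  shows "real (GG l xi N) \<le> real (AA l N) + real l ^ 2 * (real N / real xi + real (card (S2 l (real N))))"
proof -
  define T where "T = {p \<in> S2 l (real N). xi < p}"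
  have Tfin: "finite T" unfolding T_def using S2_finite[OF l] by auto
  have Tpr: "prime p" if "p \<in> T" for p using that by (simp add: T_def S2_def PP_def)
  define Bad where "Bad = (\<Union>p\<in>T. {n\<in>{1..N}. int (p^2) dvd ff l (int n)})"
  have sub: "{n\<in>{1..N}. goodP l (Pxi xi) n} \<subseteq> {n\<in>{1..N}. squarefree (ff l (int n))} \<union> Bad"
  proof
    fix n assume n: "n \<in> {n\<in>{1..N}. goodP l (Pxi xi) n}"
    show "n \<in> {n\<in>{1..N}. squarefree (ff l (int n))} \<union> Bad"
    proof (cases "squarefree (ff l (int n))")
      case True then show ?thesis using n by simp
    next
      case False
      have "ff l (int n) \<ge> 1" using l by (intro ff_ge1) (auto simp: prime_gt_0_nat Suc_leI)
      then obtain p :: nat where p: "prime p" "int (p^2) dvd ff l (int n)"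
        using False sqfree_iff by fastforce
      have "p \<notin> Pxi xi" using n p unfolding goodP_def by auto
      then have "xi < p" using p by (auto simp: Pxi_def)
      moreover have "p \<in> S2 l (real N)" using in_S2[OF l p(1) _ _ p(2), of N] n by auto
      ultimately have "p \<in> T" by (simp add: T_def)
      then show ?thesis using n p unfolding Bad_def by blast
    qed
  qed
  have "GG l xi N \<le> card ({n\<in>{1..N}. squarefree (ff l (int n))} \<union> Bad)"
    unfolding GG_def by (intro card_mono sub) (auto simp: Bad_def Tfin)
  also have "\<dots> \<le> AA l N + card Bad" unfolding AA_def by (rule card_Un_le)
  finally have g1: "real (GG l xi N) \<le> real (AA l N) + real (card Bad)" by simp
  have "card Bad \<le> (\<Sum>p\<in>T. card {n\<in>{1..N}. int (p^2) dvd ff l (int n)})"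
    unfolding Bad_def using Tfin by (rule card_UN_le)
  then have "real (card Bad) \<le> real (\<Sum>p\<in>T. card {n\<in>{1..N}. int (p^2) dvd ff l (int n)})"
    by (simp only: of_nat_le_iff)
  also have "\<dots> = (\<Sum>p\<in>T. real (card {n\<in>{1..N}. int (p^2) dvd ff l (int n)}))"
    by (simp only: of_nat_sum)
  also have "\<dots> \<le> (\<Sum>p\<in>T. real l ^ 2 * (real N * (1 / real p ^ 2) + 1))"
  proof (intro sum_mono)
    fix p assume pT: "p \<in> T"
    have pp: "prime p" using Tpr pT .
    have "p^2 > 0" using pp prime_gt_0_nat by auto
    have "real (card {n\<in>{1..N}. int (p^2) dvd ff l (int n)}) \<le> real (delta l (p^2)) * (real N / real (p^2) + 1)"
      by (rule count_dvd_real[OF l \<open>p^2 > 0\<close>])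
    also have "\<dots> \<le> real l ^ 2 * (real N / real (p^2) + 1)"
    proof (intro mult_right_mono)
      have "delta l (p^2) \<le> l^2" by (rule delta_le[OF l pp])
      then show "real (delta l (p^2)) \<le> real l ^ 2" by (metis of_nat_le_iff of_nat_power)
    qed auto
    also have "\<dots> = real l ^ 2 * (real N * (1 / real p ^ 2) + 1)" by simp
    finally show "real (card {n\<in>{1..N}. int (p^2) dvd ff l (int n)}) \<le> real l ^ 2 * (real N * (1 / real p ^ 2) + 1)" .
  qed
  also have "\<dots> = real l ^ 2 * (real N * (\<Sum>p\<in>T. 1 / real p ^ 2) + real (card T))"
    by (simp add: sum_distrib_left sum.distrib algebra_simps)
  also have "\<dots> \<le> real l ^ 2 * (real N / real xi + real (card (S2 l (real N))))"
  proof (intro mult_left_mono add_mono)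
    have "(\<Sum>p\<in>T. 1 / real p ^ 2) \<le> 1 / real xi" using Tfin xi by (intro tail_sum) (auto simp: T_def)
    then have "real N * (\<Sum>p\<in>T. 1 / real p ^ 2) \<le> real N * (1 / real xi)" by (intro mult_left_mono) auto
    then show "real N * (\<Sum>p\<in>T. 1 / real p ^ 2) \<le> real N / real xi" by simp
    have "card T \<le> card (S2 l (real N))" unfolding T_def using S2_finite[OF l] by (intro card_mono) auto
    then show "real (card T) \<le> real (card (S2 l (real N)))" by simp
  qed auto
  finally show ?thesis using g1 by linarith
qed

lemma KM_eq:
  assumes l: "prime l"
  shows "real (card {a\<in>{..<MP (Pxi xi)}. goodP l (Pxi xi) a}) / real (MP (Pxi xi)) = (\<Prod>i\<le>xi. aa l i)"
proof -
  have pr: "\<forall>p\<in>Pxi xi. prime p" by (simp add: Pxi_def)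
  have "real (card {a\<in>{..<MP (Pxi xi)}. goodP l (Pxi xi) a}) / real (MP (Pxi xi))
      = (\<Prod>p\<in>Pxi xi. real (p^2 - delta l (p^2))) / (\<Prod>p\<in>Pxi xi. real (p^2))"
    unfolding good_count[OF l Pxi_finite pr] by (simp add: MP_def of_nat_prod)
  also have "\<dots> = (\<Prod>p\<in>Pxi xi. real (p^2 - delta l (p^2)) / real (p^2))"
    by (simp add: prod_dividef)
  also have "\<dots> = (\<Prod>p\<in>Pxi xi. aa l p)"
  proof (intro prod.cong refl)
    fix p assume "p \<in> Pxi xi"
    then have p: "prime p" by (simp add: Pxi_def)
    have le: "delta l (p^2) \<le> p^2" using delta_lt[OF l p] by simp
    have pos: "real (p^2) > 0" using p prime_gt_0_nat by simp
    have "real (p^2 - delta l (p^2)) = real (p^2) - real (delta l (p^2))" using le by (rule of_nat_diff)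
    then show "real (p^2 - delta l (p^2)) / real (p^2) = aa l p"
      using pos p by (simp add: aa_def diff_divide_distrib)
  qed
  also have "\<dots> = (\<Prod>i\<le>xi. aa l i)"
    by (intro prod.mono_neutral_left) (auto simp: Pxi_def aa_def)
  finally show ?thesis .
qed

lemma GG_lim:
  assumes l: "prime l"
  shows "(\<lambda>N. real (GG l xi N) / real N) \<longlonglongrightarrow> (\<Prod>i\<le>xi. aa l i)"
proof -
  define M where "M = MP (Pxi xi)"
  define P where "P = goodP l (Pxi xi)"
  define K where "K = card {a\<in>{..<M}. P a}"
  have M: "M > 0" unfolding M_def by (intro MP_pos) (simp add: Pxi_def)
  have Pp: "P a = P (a mod M)" for a unfolding P_def M_def by (rule goodP_periodic[OF Pxi_finite])
  have KM: "real K / real M = (\<Prod>i\<le>xi. aa l i)" unfolding K_def M_def P_def by (rule KM_eq[OF l])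
  have KM1: "real K / real M \<le> real K"
  proof -
    have "real M \<ge> 1" using M by simp
    then show ?thesis by (simp add: divide_le_eq mult_le_cancel_left1 mult.commute)
  qed
  show ?thesis
  proof (rule bounded_dev_tendsto[where B = "2 * real K + 1"], unfold KM[symmetric])
    fix N
    define cnt where "cnt = card {a\<in>{..<Suc N}. P a}"
    have b1: "GG l xi N \<le> cnt" unfolding GG_def cnt_def P_def[symmetric] by (intro card_mono) auto
    have "cnt \<le> card (insert 0 {n\<in>{1..N}. P n})" unfolding cnt_def by (intro card_mono) auto
    also have "\<dots> \<le> Suc (card {n\<in>{1..N}. P n})" by (rule card_insert_le_m1) auto
    finally have b2: "cnt \<le> Suc (GG l xi N)" unfolding GG_def P_def .
    have b3: "\<bar>real cnt - real K / real M * real (Suc N)\<bar> \<le> real K"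
      unfolding cnt_def K_def by (rule periodic_count_bounds[of M P, OF M Pp])
    define k where "k = real K / real M"
    have e: "k * real (Suc N) = k * real N + k" by (simp add: algebra_simps)
    have k0: "0 \<le> k" by (simp add: k_def)
    have r1: "real (GG l xi N) \<le> real cnt" using b1 by (simp only: of_nat_le_iff)
    have r2: "real cnt \<le> real (GG l xi N) + 1" using b2 by simp
    have b3': "real cnt - k * real (Suc N) \<le> real K" "k * real (Suc N) - real cnt \<le> real K"
      using b3 unfolding k_def[symmetric] abs_le_iff by linarith+
    have "\<bar>real (GG l xi N) - k * real N\<bar> \<le> 2 * real K + 1"
      unfolding abs_le_iff using e k0 r1 r2 b3' KM1[folded k_def] by linarith
    then show "\<bar>real (GG l xi N) - real K / real M * real N\<bar> \<le> 2 * real K + 1" by (simp add: k_def)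
  qed
qed

lemma aa_prod:
  assumes l: "prime l"
  shows "convergent_prod (aa l)" "prodinf (aa l) \<noteq> 0" "(\<lambda>xi. \<Prod>i\<le>xi. aa l i) \<longlonglongrightarrow> prodinf (aa l)"
proof -
  define z where "z = (\<lambda>i. if prime i then - (real (delta l (i^2)) / real (i^2)) else 0)"
  have az: "aa l = (\<lambda>i. 1 + z i)" by (auto simp: aa_def z_def)
  have bound: "norm (z i) \<le> real l ^ 2 * inverse (real i ^ 2)" for i
  proof (cases "prime i")
    case True
    have "delta l (i^2) \<le> l^2" by (rule delta_le[OF l True])
    then have d: "real (delta l (i^2)) \<le> real l ^ 2" by (metis of_nat_le_iff of_nat_power)
    have "norm (z i) = real (delta l (i^2)) / real i ^ 2" using True by (simp add: z_def)
    also have "\<dots> \<le> real l ^ 2 / real i ^ 2" using d by (intro divide_right_mono) auto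
    finally show ?thesis by (simp add: divide_inverse)
  qed (simp add: z_def)
  have "summable (\<lambda>i. real l ^ 2 * inverse (real i ^ 2))"
    by (intro summable_mult inverse_power_summable) simp
  then have "summable (\<lambda>i. \<bar>z i\<bar>)"
    by (rule summable_comparison_test[rotated]) (use bound in auto)
  moreover have "z i \<noteq> -1" for i
  proof (cases "prime i")
    case True
    have "delta l (i^2) < i^2" by (rule delta_lt[OF l True])
    then have "real (delta l (i^2)) / real (i^2) < 1" using True prime_gt_0_nat by (simp add: field_simps)
    then show ?thesis using True by (simp add: z_def)
  qed (simp add: z_def)
  ultimately have cp: "convergent_prod (\<lambda>i. 1 + z i)" by (rule summable_imp_convergent_prod_real)
  then show cp': "convergent_prod (aa l)" using az by simp
  have "aa l i \<noteq> 0" for i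
  proof (cases "prime i")
    case True
    have "delta l (i^2) < i^2" by (rule delta_lt[OF l True])
    then have "real (delta l (i^2)) / real (i^2) < 1" using True prime_gt_0_nat by (simp add: field_simps)
    then show ?thesis using True by (simp add: aa_def)
  qed (simp add: aa_def)
  then show "prodinf (aa l) \<noteq> 0" using cp' by (intro prodinf_nonzero) auto
  show "(\<lambda>xi. \<Prod>i\<le>xi. aa l i) \<longlonglongrightarrow> prodinf (aa l)" using cp' by (rule convergent_prod_LIMSEQ)
qed



lemma seq_lim:
  assumes l: "prime l"
    and hyp: "(\<lambda>N. real (card (S2 l (real N))) / real N) \<longlonglongrightarrow> 0"
  shows "(\<lambda>N. real (AA l N) / real N) \<longlonglongrightarrow> prodinf (aa l)"
proof (rule LIMSEQ_I)
  fix r :: real assume r: "0 < r"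
  define C where "C = prodinf (aa l)"
  define e where "e = r / 4"
  have e: "e > 0" using r by (simp add: e_def)
  have t1: "eventually (\<lambda>xi. dist (\<Prod>i\<le>xi. aa l i) C < e) sequentially"
    using tendstoD[OF aa_prod(3)[OF l] e] by (simp add: C_def)
  have t2: "eventually (\<lambda>xi. dist (real l ^ 2 / real xi) 0 < e) sequentially"
    using tendstoD[OF lim_const_over_n e] .
  have "eventually (\<lambda>xi. xi \<ge> 1 \<and> dist (\<Prod>i\<le>xi. aa l i) C < e \<and> dist (real l ^ 2 / real xi) 0 < e) sequentially"
    using eventually_ge_at_top[of 1] t1 t2 by eventually_elim auto
  then obtain xi where xi: "xi \<ge> 1" "\<bar>(\<Prod>i\<le>xi. aa l i) - C\<bar> < e" "real l ^ 2 / real xi < e"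
    unfolding eventually_sequentially dist_real_def by auto
  define c where "c = (\<Prod>i\<le>xi. aa l i)"
  have t3: "eventually (\<lambda>N. dist (real (GG l xi N) / real N) c < e) sequentially"
    using tendstoD[OF GG_lim[OF l] e] by (simp add: c_def)
  have hyp2: "(\<lambda>N. real l ^ 2 * (real (card (S2 l (real N))) / real N)) \<longlonglongrightarrow> 0"
    using tendsto_mult_right_zero[OF hyp] by simp
  have t4: "eventually (\<lambda>N. dist (real l ^ 2 * (real (card (S2 l (real N))) / real N)) 0 < e) sequentially"
    using tendstoD[OF hyp2 e] .
  have "eventually (\<lambda>N. N \<ge> 1 \<and> dist (real (GG l xi N) / real N) c < e \<and>
      dist (real l ^ 2 * (real (card (S2 l (real N))) / real N)) 0 < e) sequentially"
    using eventually_ge_at_top[of 1] t3 t4 by eventually_elim auto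
  then obtain N0 where N0: "\<And>N. N \<ge> N0 \<Longrightarrow> N \<ge> 1 \<and> \<bar>real (GG l xi N) / real N - c\<bar> < e \<and>
      \<bar>real l ^ 2 * (real (card (S2 l (real N))) / real N)\<bar> < e"
    unfolding eventually_sequentially dist_real_def by auto
  show "\<exists>no. \<forall>n\<ge>no. norm (real (AA l n) / real n - prodinf (aa l)) < r"
  proof (intro exI allI impI)
    fix N assume N: "N \<ge> N0"
    have N1: "N \<ge> 1" and g: "\<bar>real (GG l xi N) / real N - c\<bar> < e"
      and s: "\<bar>real l ^ 2 * (real (card (S2 l (real N))) / real N)\<bar> < e" using N0[OF N] by auto
    have Npos: "real N > 0" using N1 by simp
    have a1: "real (AA l N) / real N \<le> real (GG l xi N) / real N"
      using AA_le_GG[OF l, of N xi] by (intro divide_right_mono) auto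
    have "real (GG l xi N) / real N \<le> (real (AA l N) + real l ^ 2 * (real N / real xi + real (card (S2 l (real N))))) / real N"
      using GG_le[OF l xi(1), of N] by (intro divide_right_mono) auto
    also have "\<dots> = real (AA l N) / real N + real l ^ 2 / real xi + real l ^ 2 * (real (card (S2 l (real N))) / real N)"
      using Npos by (simp add: field_simps)
    finally have a2: "real (GG l xi N) / real N \<le> real (AA l N) / real N + real l ^ 2 / real xi + real l ^ 2 * (real (card (S2 l (real N))) / real N)" .
    have "\<bar>real (AA l N) / real N - C\<bar> < 4 * e"
      using a1 a2 g s xi(2) xi(3) unfolding c_def abs_less_iff by linarith
    then show "norm (real (AA l N) / real N - prodinf (aa l)) < r" by (simp add: e_def C_def)
  qed
qed

lemma nat_floor_ratio: "((\<lambda>X::real. real (nat \<lfloor>X\<rfloor>) / X) \<longlongrightarrow> 1) at_top"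
proof (rule tendsto_sandwich[of "\<lambda>X. (X - 1) / X" _ _ "\<lambda>X. 1"])
  show "eventually (\<lambda>X. (X - 1) / X \<le> real (nat \<lfloor>X\<rfloor>) / X) at_top"
    using eventually_ge_at_top[of "1::real"]
  proof eventually_elim
    case (elim X)
    have "X - 1 \<le> real (nat \<lfloor>X\<rfloor>)" using elim by linarith
    then show ?case using elim by (intro divide_right_mono) auto
  qed
  show "eventually (\<lambda>X. real (nat \<lfloor>X\<rfloor>) / X \<le> 1) at_top"
    using eventually_ge_at_top[of "1::real"]
  proof eventually_elim
    case (elim X)
    have "real (nat \<lfloor>X\<rfloor>) \<le> X" using elim by linarith
    then show ?case using elim by simp
  qed
  show "((\<lambda>X::real. (X - 1) / X) \<longlongrightarrow> 1) at_top" by real_asymp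
  show "((\<lambda>X::real. 1) \<longlongrightarrow> 1) at_top" by simp
qed

theorem theorem2:
  fixes l :: nat
  assumes "prime l" and "odd l"
    and "(\<lambda>T. real (card (S2 l T))) \<in> o[at_top](\<lambda>T. T)"
  shows "(\<lambda>X::real. real (card {n::nat. 1 \<le> n \<and> real n \<le> X \<and> squarefree (Phi l (int n))}))
           \<sim>[at_top] (\<lambda>X. (\<Prod>p. if prime p then 1 - real (delta l (p^2)) / real (p^2) else 1) * X)"
proof -
  have l: "prime l" by fact
  define C where "C = prodinf (aa l)"
  have aeq: "aa l = (\<lambda>p. if prime p then 1 - real (delta l (p^2)) / real (p^2) else 1)"
    by (intro ext) (simp only: aa_def)
  have Ceq: "(\<Prod>p. if prime p then 1 - real (delta l (p^2)) / real (p^2) else 1) = C"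
    unfolding C_def aeq ..
  have C0: "C \<noteq> 0" unfolding C_def by (rule aa_prod(2)[OF l])
  have h0: "((\<lambda>T. real (card (S2 l T)) / T) \<longlongrightarrow> 0) at_top"
    using smalloD_tendsto[OF assms(3)] .
  have hyp: "(\<lambda>N. real (card (S2 l (real N))) / real N) \<longlonglongrightarrow> 0"
    using filterlim_compose[OF h0 filterlim_real_sequentially] by simp
  have sl: "(\<lambda>N. real (AA l N) / real N) \<longlonglongrightarrow> C"
    unfolding C_def by (rule seq_lim[OF l hyp])
  have fl: "filterlim (\<lambda>X::real. nat \<lfloor>X\<rfloor>) sequentially at_top"
    using filterlim_compose[OF filterlim_nat_sequentially filterlim_floor_sequentially] .
  have h1: "((\<lambda>X::real. real (AA l (nat \<lfloor>X\<rfloor>)) / real (nat \<lfloor>X\<rfloor>)) \<longlongrightarrow> C) at_top"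
    using filterlim_compose[OF sl fl] .
  have h2: "((\<lambda>X::real. real (AA l (nat \<lfloor>X\<rfloor>)) / real (nat \<lfloor>X\<rfloor>) * (real (nat \<lfloor>X\<rfloor>) / X)) \<longlongrightarrow> C * 1) at_top"
    by (intro tendsto_mult h1 nat_floor_ratio)
  have setEq: "{n::nat. 1 \<le> n \<and> real n \<le> X \<and> squarefree (Phi l (int n))} = {n\<in>{1..nat \<lfloor>X\<rfloor>}. squarefree (ff l (int n))}" for X :: real
  proof -
    have "real n \<le> X \<longleftrightarrow> n \<le> nat \<lfloor>X\<rfloor>" if "1 \<le> n" for n :: nat
    proof -
      have "real n \<le> X \<longleftrightarrow> int n \<le> \<lfloor>X\<rfloor>" by (simp add: le_floor_iff)
      also have "\<dots> \<longleftrightarrow> n \<le> nat \<lfloor>X\<rfloor>" using that by linarith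
      finally show ?thesis .
    qed
    then show ?thesis using l by (simp add: Phi_prime) blast
  qed
  have h3: "((\<lambda>X::real. real (card {n::nat. 1 \<le> n \<and> real n \<le> X \<and> squarefree (Phi l (int n))}) / X) \<longlongrightarrow> C) at_top"
  proof -
    have "eventually (\<lambda>X::real. real (AA l (nat \<lfloor>X\<rfloor>)) / real (nat \<lfloor>X\<rfloor>) * (real (nat \<lfloor>X\<rfloor>) / X)
        = real (card {n::nat. 1 \<le> n \<and> real n \<le> X \<and> squarefree (Phi l (int n))}) / X) at_top"
      using eventually_ge_at_top[of "1::real"]
    proof eventually_elim
      case (elim X)
      have "real (nat \<lfloor>X\<rfloor>) > 0" using elim by linarith
      then show ?case unfolding setEq AA_def by simp
    qed
    moreover have h2': "((\<lambda>X::real. real (AA l (nat \<lfloor>X\<rfloor>)) / real (nat \<lfloor>X\<rfloor>) * (real (nat \<lfloor>X\<rfloor>) / X)) \<longlongrightarrow> C) at_top"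
      using h2 by (simp only: mult_1_right)
    ultimately show ?thesis by (rule Lim_transform_eventually[rotated])
  qed
  have "(\<lambda>X::real. real (card {n::nat. 1 \<le> n \<and> real n \<le> X \<and> squarefree (Phi l (int n))})) \<sim>[at_top] (\<lambda>X. C * X)"
    by (rule asymp_equivI'_const[OF h3 C0])
  then show ?thesis unfolding Ceq .
qed


end
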